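(* Consider the delay differential system \[ \begin{aligned} \dot T(t)&= s-dT(t)+aT(t)\Big(1-\frac{T(t)+I(t)}{T_{\max}}\Big)-\frac{bT(t)V(t)}{1+\alpha V(t)},\\ \dot I(t)&= \frac{bT(t-\tau)V(t-\tau)}{1+\alpha V(t-\tau)}+aI(t)\Big(1-\frac{T(t)+I(t)}{T_{\max}}\Big)-\mu I(t),\\ \dot V(t)&= pI(t)-cV(t), \end{aligned} \] with positive constants $s,d,a,T_{\max},b,\alpha,\mu,p,c$ and $\tau\ge0$, and nonnegative continuous initial data on $[-\tau,0]$. Let \[ T_0=\frac{T_{\max}}{2a}\Big(a-d+\sqrt{(a-d)^2+\tfrac{4as}{T_{\max}}}\Big),\qquad R_0=\frac{1}{\mu}\Big[\frac{bpT_0}{c}+a\Big(1-\frac{T_0}{T_{\max}}\Big)\Big]. \] If $R_0\le1$, then the infection-free equilibrium $E_1=(T_0,0,0)$ is globally asymptotically stable.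
   Context: $E_1=(T_0,0,0)$ is a constant solution of the system. *)

theory Defs
  imports "HOL-Analysis.Analysis"
begin

definition T0_eq :: "real \<Rightarrow> real \<Rightarrow> real \<Rightarrow> real \<Rightarrow> real" where
  "T0_eq s d a Tmax = Tmax / (2 * a) * (a - d + sqrt ((a - d)^2 + 4 * a * s / Tmax))"

definition R0_num :: "real \<Rightarrow> real \<Rightarrow> real \<Rightarrow> real \<Rightarrow> real \<Rightarrow> real \<Rightarrow> real \<Rightarrow> real \<Rightarrow> real" where
  "R0_num s d a Tmax b mu p c =
     (1 / mu) * (b * p * T0_eq s d a Tmax / c + a * (1 - T0_eq s d a Tmax / Tmax))"

definition is_solution ::
  "real \<Rightarrow> real \<Rightarrow> real \<Rightarrow> real \<Rightarrow> real \<Rightarrow> real \<Rightarrow> real \<Rightarrow> real \<Rightarrow> real \<Rightarrow> real \<Rightarrow>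
   (real \<Rightarrow> real) \<Rightarrow> (real \<Rightarrow> real) \<Rightarrow> (real \<Rightarrow> real) \<Rightarrow> bool" where
  "is_solution s d a Tmax b \<alpha> \<mu> p c \<tau> T I V \<longleftrightarrow>
     (\<forall>t\<in>{-\<tau>..0}. T t \<ge> 0 \<and> I t \<ge> 0 \<and> V t \<ge> 0) \<and>
     continuous_on {-\<tau>..} T \<and> continuous_on {-\<tau>..} I \<and> continuous_on {-\<tau>..} V \<and>
     (\<forall>t\<ge>0.
        (T has_real_derivative
           (s - d * T t + a * T t * (1 - (T t + I t) / Tmax) - b * T t * V t / (1 + \<alpha> * V t)))
          (at t within {0..}) \<and>
        (I has_real_derivative
           (b * T (t - \<tau>) * V (t - \<tau>) / (1 + \<alpha> * V (t - \<tau>))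
            + a * I t * (1 - (T t + I t) / Tmax) - \<mu> * I t))
          (at t within {0..}) \<and>
        (V has_real_derivative (p * I t - c * V t)) (at t within {0..}))"

end

theory Submission
  imports Defs
begin



lemma neg_lb:
  fixes x x' :: "real \<Rightarrow> real" and a b B :: real
  assumes ab: "a \<le> b" and cont: "continuous_on {a..b} x"
    and der: "\<And>t. a < t \<Longrightarrow> t < b \<Longrightarrow> (x has_real_derivative x' t) (at t)"
    and x0: "x a \<ge> 0" and B: "B \<ge> 0"
    and lb: "\<And>t. a < t \<Longrightarrow> t < b \<Longrightarrow> x t < 0 \<Longrightarrow> x' t \<ge> -B"
    and t: "t \<in> {a..b}"
  shows "x t \<ge> -B * (b - a)"
proof (cases "x t \<ge> 0")
  case True
  moreover have "B * (b - a) \<ge> 0" using B ab by simp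
  ultimately show ?thesis by linarith
next
  case False
  define S where "S = {u \<in> {a..t}. (\<lambda>_. 0) u \<le> x u}"
  have contt: "continuous_on {a..t} x" using cont t by (auto intro: continuous_on_subset)
  have cS: "closed S" unfolding S_def
    by (rule continuous_on_closed_Collect_le) (auto intro: contt)
  have aS: "a \<in> S" using t x0 by (auto simp: S_def)
  have bS: "bdd_above S" unfolding S_def by (auto intro: bdd_aboveI[of _ t])
  define u0 where "u0 = Sup S"
  have u0S: "u0 \<in> S" unfolding u0_def using closed_contains_Sup[OF _ bS cS] aS by auto
  have "u0 \<le> t" "u0 \<noteq> t" using u0S False by (auto simp: S_def)
  then have u0t: "u0 < t" by simp
  have au0: "a \<le> u0" using aS bS unfolding u0_def by (simp add: cSup_upper)
  have neg: "x v < 0" if "u0 < v" "v \<le> t" for v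
  proof (rule ccontr)
    assume "\<not> x v < 0"
    then have "v \<in> S" using that au0 by (auto simp: S_def)
    then have "v \<le> u0" unfolding u0_def using bS by (simp add: cSup_upper)
    then show False using that by simp
  qed
  have "(\<lambda>r. x r + B * r) u0 \<le> (\<lambda>r. x r + B * r) t"
  proof (rule DERIV_nonneg_imp_increasing_open[of u0 t])
    show "u0 \<le> t" using u0t by simp
    fix r assume r: "u0 < r" "r < t"
    have "((\<lambda>r. x r + B * r) has_real_derivative x' r + B) (at r)"
      using der[of r] r au0 t by (auto intro!: derivative_eq_intros)
    moreover have "x' r + B \<ge> 0" using lb[of r] neg[of r] r au0 t by auto
    ultimately show "\<exists>y. ((\<lambda>r. x r + B * r) has_real_derivative y) (at r) \<and> 0 \<le> y" by blast
  next
    show "continuous_on {u0..t} (\<lambda>r. x r + B * r)"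
      using contt au0 by (auto intro!: continuous_intros intro: continuous_on_subset)
  qed
  moreover have "x u0 \<ge> 0" using u0S by (simp add: S_def)
  moreover have "B * (t - u0) \<le> B * (b - a)" using B au0 t by (auto intro!: mult_left_mono)
  ultimately show ?thesis by (simp add: algebra_simps)
qed

lemma lipschitz_deriv:
  fixes f f' :: "real \<Rightarrow> real"
  assumes cont: "continuous_on {t0..} f"
    and der: "\<And>t. t > t0 \<Longrightarrow> (f has_real_derivative f' t) (at t)"
    and bd: "\<And>t. t > t0 \<Longrightarrow> \<bar>f' t\<bar> \<le> M"
    and u: "u \<ge> t0" and v: "v \<ge> t0"
  shows "\<bar>f u - f v\<bar> \<le> M * \<bar>u - v\<bar>"
proof -
  have *: "\<bar>f y - f x\<bar> \<le> M * (y - x)" if xy: "t0 \<le> x" "x \<le> y" for x y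
  proof -
    have c: "continuous_on {x..y} f" using cont xy by (auto intro: continuous_on_subset)
    have "(\<lambda>r. f r + M * r) x \<le> (\<lambda>r. f r + M * r) y"
    proof (rule DERIV_nonneg_imp_increasing_open[OF xy(2)])
      fix r assume r: "x < r" "r < y"
      have "((\<lambda>r. f r + M * r) has_real_derivative f' r + M) (at r)"
        using der[of r] r xy by (auto intro!: derivative_eq_intros)
      moreover have "f' r + M \<ge> 0" using bd[of r] r xy by auto
      ultimately show "\<exists>y. ((\<lambda>r. f r + M * r) has_real_derivative y) (at r) \<and> 0 \<le> y" by blast
    qed (use c in \<open>auto intro!: continuous_intros\<close>)
    moreover have "(\<lambda>r. f r - M * r) y \<le> (\<lambda>r. f r - M * r) x"
    proof (rule DERIV_nonpos_imp_decreasing_open[OF xy(2)])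
      fix r assume r: "x < r" "r < y"
      have "((\<lambda>r. f r - M * r) has_real_derivative f' r - M) (at r)"
        using der[of r] r xy by (auto intro!: derivative_eq_intros)
      moreover have "f' r - M \<le> 0" using bd[of r] r xy by auto
      ultimately show "\<exists>y. ((\<lambda>r. f r - M * r) has_real_derivative y) (at r) \<and> y \<le> 0" by blast
    qed (use c in \<open>auto intro!: continuous_intros\<close>)
    ultimately show ?thesis by (simp add: algebra_simps abs_le_iff)
  qed
  show ?thesis
  proof (cases "u \<le> v")
    case True then show ?thesis using *[of u v] u by (simp add: abs_minus_commute)
  next
    case False then show ?thesis using *[of v u] v by simp
  qed
qed

lemma nonincr_deriv:
  fixes L L' :: "real \<Rightarrow> real"
  assumes cont: "continuous_on {t0..} L"
    and der: "\<And>t. t > t0 \<Longrightarrow> (L has_real_derivative L' t) (at t)"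
    and np: "\<And>t. t > t0 \<Longrightarrow> L' t \<le> 0"
    and xy: "t0 \<le> x" "x \<le> y"
  shows "L y \<le> L x"
proof (rule DERIV_nonpos_imp_decreasing_open[OF xy(2)])
  fix r assume r: "x < r" "r < y"
  then have "r > t0" using xy by linarith
  then show "\<exists>y. (L has_real_derivative y) (at r) \<and> y \<le> 0" using der np by blast
next
  show "continuous_on {x..y} L" using cont xy by (auto intro: continuous_on_subset)
qed

lemma barbalat:
  fixes L L' g :: "real \<Rightarrow> real"
  assumes cont: "continuous_on {t0..} L"
    and der: "\<And>t. t > t0 \<Longrightarrow> (L has_real_derivative L' t) (at t)"
    and Lg: "\<And>t. t > t0 \<Longrightarrow> L' t \<le> - k * g t"
    and Lnn: "\<And>t. t \<ge> t0 \<Longrightarrow> L t \<ge> 0"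
    and gnn: "\<And>t. t \<ge> t0 \<Longrightarrow> g t \<ge> 0"
    and k: "k > 0" and M: "M > 0"
    and lip: "\<And>u v. u \<ge> t0 \<Longrightarrow> v \<ge> t0 \<Longrightarrow> \<bar>g u - g v\<bar> \<le> M * \<bar>u - v\<bar>"
    and e: "e > 0"
  shows "\<exists>N. \<forall>t\<ge>N. g t < e"
proof (rule ccontr)
  assume "\<not> ?thesis"
  then have big: "\<And>N. \<exists>t\<ge>N. g t \<ge> e" by (auto simp: not_less)
  define h where "h = e / (2 * M)"
  have h: "h > 0" using e M by (simp add: h_def)
  define q where "q = k * (e / 2) * h"
  have q: "q > 0" using k e h by (simp add: q_def)
  have np: "L' t \<le> 0" if "t > t0" for t
  proof -
    have "k * g t \<ge> 0" using gnn[of t] k that by simp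
    then show ?thesis using Lg[OF that] by linarith
  qed
  have mono: "L y \<le> L x" if "t0 \<le> x" "x \<le> y" for x y
    by (rule nonincr_deriv[OF cont der np that])
  have step: "L (t + h) \<le> L t - q" if t: "t \<ge> t0" "g t \<ge> e" for t
  proof -
    have gl: "g r \<ge> e / 2" if "t \<le> r" "r \<le> t + h" for r
    proof -
      have "\<bar>g r - g t\<bar> \<le> M * \<bar>r - t\<bar>" using lip[of r t] that t by simp
      also have "\<dots> \<le> M * h" using that M by (auto intro!: mult_left_mono)
      also have "\<dots> = e / 2" using M by (simp add: h_def)
      finally show ?thesis using t by linarith
    qed
    have "(\<lambda>r. L r + k * (e / 2) * r) (t + h) \<le> (\<lambda>r. L r + k * (e / 2) * r) t"
    proof (rule DERIV_nonpos_imp_decreasing_open[of t "t + h" "\<lambda>r. L r + k * (e / 2) * r"])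
      show "t \<le> t + h" using h by simp
      fix r assume r: "t < r" "r < t + h"
      have "((\<lambda>r. L r + k * (e / 2) * r) has_real_derivative L' r + k * (e / 2)) (at r)"
        using der[of r] r t by (auto intro!: derivative_eq_intros)
      moreover have "L' r + k * (e / 2) \<le> 0"
      proof -
        have "k * (e / 2) \<le> k * g r" using gl[of r] r k by (auto intro!: mult_left_mono)
        then show ?thesis using Lg[of r] r t by linarith
      qed
      ultimately show "\<exists>y. ((\<lambda>r. L r + k * (e / 2) * r) has_real_derivative y) (at r) \<and> y \<le> 0"
        by blast
    next
      show "continuous_on {t..t + h} (\<lambda>r. L r + k * (e / 2) * r)"
        using cont t by (auto intro!: continuous_intros intro: continuous_on_subset)
    qed
    moreover have "k * (e / 2) * (t + h) = k * (e / 2) * t + q" by (simp add: q_def algebra_simps)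
    ultimately show ?thesis by linarith
  qed
  have ind: "\<exists>t\<ge>t0. L t \<le> L t0 - real n * q" for n
  proof (induction n)
    case 0 then show ?case by auto
  next
    case (Suc n)
    then obtain t where t: "t \<ge> t0" "L t \<le> L t0 - real n * q" by auto
    obtain t' where t': "t' \<ge> t" "g t' \<ge> e" using big by blast
    have "L (t' + h) \<le> L t' - q" using step[of t'] t t' by simp
    also have "L t' \<le> L t" using mono[of t t'] t t' by simp
    finally have "L (t' + h) \<le> L t0 - real (Suc n) * q" using t by (simp add: algebra_simps)
    then show ?case using t t' h by (intro exI[of _ "t' + h"]) auto
  qed
  obtain n where n: "real n * q > L t0" using q reals_Archimedean3 by blast
  obtain t where "t \<ge> t0" "L t \<le> L t0 - real n * q" using ind by blast
  then show False using Lnn[of t] n by linarith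
qed




lemma T0_props:
  fixes s d a Tmax :: real
  assumes s: "s > 0" and a: "a > 0" and Tm: "Tmax > 0"
  shows "T0_eq s d a Tmax > 0"
    and "s - d * T0_eq s d a Tmax + a * T0_eq s d a Tmax * (1 - T0_eq s d a Tmax / Tmax) = 0"
proof -
  define D where "D = (a - d)^2 + 4 * a * s / Tmax"
  define r where "r = sqrt D"
  have D0: "4 * a * s / Tmax > 0" using s a Tm by simp
  then have Dp: "D > (a - d)^2" by (simp add: D_def)
  have D00: "0 \<le> D" using Dp zero_le_power2[of "a-d"] by linarith
  then have r2: "r^2 = D" unfolding r_def by (rule real_sqrt_pow2)
  have rpos: "r \<ge> 0" unfolding r_def using D00 by simp
  have "\<bar>a - d\<bar> < r"
  proof -
    have "sqrt ((a-d)^2) < sqrt D" using Dp by (simp only: real_sqrt_less_iff)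
    then show ?thesis by (simp add: r_def)
  qed
  then have ad: "a - d + r > 0" by linarith
  have K: "T0_eq s d a Tmax = Tmax / (2 * a) * (a - d + r)" by (simp add: T0_eq_def D_def r_def)
  show "T0_eq s d a Tmax > 0" unfolding K using ad a Tm by simp
  show "s - d * T0_eq s d a Tmax + a * T0_eq s d a Tmax * (1 - T0_eq s d a Tmax / Tmax) = 0"
    unfolding K using a Tm r2 unfolding D_def
    by (simp add: field_simps power2_eq_square) algebra
qed

lemma prod_lb:
  fixes x y M N :: real
  assumes "\<bar>x\<bar> \<le> M" "\<bar>y\<bar> \<le> N"
  shows "x * y \<ge> - (M * N)"
proof -
  have "\<bar>x * y\<bar> \<le> M * N" unfolding abs_mult
    using assms by (intro mult_mono) auto
  then show ?thesis by linarith
qed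

locale sys =
  fixes s d a Tmax b \<alpha> \<mu> p c \<tau> :: real and T I V :: "real \<Rightarrow> real"
  assumes s: "s > 0" and d: "d > 0" and a: "a > 0" and Tm: "Tmax > 0" and b: "b > 0"
    and al: "\<alpha> > 0" and mu: "\<mu> > 0" and p: "p > 0" and c: "c > 0" and tau: "\<tau> \<ge> 0"
    and sol: "is_solution s d a Tmax b \<alpha> \<mu> p c \<tau> T I V"
begin

lemma init: "t \<in> {-\<tau>..0} \<Longrightarrow> T t \<ge> 0 \<and> I t \<ge> 0 \<and> V t \<ge> 0"
  using sol unfolding is_solution_def by blast

lemma contT: "continuous_on {-\<tau>..} T" and contI: "continuous_on {-\<tau>..} I"
  and contV: "continuous_on {-\<tau>..} V"
  using sol unfolding is_solution_def by blast+

lemma der_within: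
  assumes "t \<ge> 0"
  shows "(T has_real_derivative
           (s - d * T t + a * T t * (1 - (T t + I t) / Tmax) - b * T t * V t / (1 + \<alpha> * V t)))
          (at t within {0..})"
    and "(I has_real_derivative
           (b * T (t - \<tau>) * V (t - \<tau>) / (1 + \<alpha> * V (t - \<tau>))
            + a * I t * (1 - (T t + I t) / Tmax) - \<mu> * I t))
          (at t within {0..})"
    and "(V has_real_derivative (p * I t - c * V t)) (at t within {0..})"
  using sol assms unfolding is_solution_def by blast+

lemma at_pos: "t > 0 \<Longrightarrow> at t within {0..} = at (t::real)"
  by (rule at_within_interior) (simp add: interior_real_atLeast)

lemma derT: "t > 0 \<Longrightarrow> (T has_real_derivative
           (s - d * T t + a * T t * (1 - (T t + I t) / Tmax) - b * T t * V t / (1 + \<alpha> * V t)))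
          (at t)"
  using der_within(1)[of t] at_pos[of t] by simp

lemma derI: "t > 0 \<Longrightarrow> (I has_real_derivative
           (b * T (t - \<tau>) * V (t - \<tau>) / (1 + \<alpha> * V (t - \<tau>))
            + a * I t * (1 - (T t + I t) / Tmax) - \<mu> * I t))
          (at t)"
  using der_within(2)[of t] at_pos[of t] by simp

lemma derV: "t > 0 \<Longrightarrow> (V has_real_derivative (p * I t - c * V t)) (at t)"
  using der_within(3)[of t] at_pos[of t] by simp

end




context sys begin

lemma local_nonneg:
  assumes ts: "ts \<ge> 0" and nn: "\<And>u. u \<in> {-\<tau>..ts} \<Longrightarrow> T u \<ge> 0 \<and> I u \<ge> 0 \<and> V u \<ge> 0"
  shows "\<exists>\<eta>>0. \<forall>u\<in>{ts..ts+\<eta>}. T u \<ge> 0 \<and> I u \<ge> 0 \<and> V u \<ge> 0"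
proof -
  have tsin: "ts \<in> {-\<tau>..}" using ts tau by simp
  have "\<exists>\<delta>>0. \<forall>x'\<in>{-\<tau>..}. dist x' ts < \<delta> \<longrightarrow> dist (V x') (V ts) < 1/\<alpha>"
    using contV tsin al unfolding continuous_on_iff by simp
  then obtain \<eta>0 where \<eta>0: "\<eta>0 > 0"
    and h\<eta>0: "\<And>u. u \<in> {-\<tau>..} \<Longrightarrow> dist u ts < \<eta>0 \<Longrightarrow> dist (V u) (V ts) < 1/\<alpha>" by blast
  define J0 where "J0 = {ts..ts + \<eta>0/2}"
  have J0sub: "J0 \<subseteq> {-\<tau>..}" using ts tau by (auto simp: J0_def)
  have Vts: "V ts \<ge> 0" using nn[of ts] ts tau by simp
  have den: "1 + \<alpha> * V u > 0" if "u \<in> J0" for u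
  proof -
    have "dist u ts < \<eta>0" using that \<eta>0 by (auto simp: J0_def dist_real_def)
    then have "dist (V u) (V ts) < 1/\<alpha>" using h\<eta>0[of u] that J0sub by auto
    then have "V u > - (1/\<alpha>)" using Vts by (auto simp: dist_real_def)
    then have "\<alpha> * V u > \<alpha> * (-(1/\<alpha>))" using al by (intro mult_strict_left_mono) auto
    then show ?thesis using al by simp
  qed
  define k1 where "k1 u = -d + a*(1-(T u + I u)/Tmax) - b*V u/(1+\<alpha>*V u)" for u
  define k2 where "k2 u = a*(1-(T u + I u)/Tmax) - \<mu>" for u
  define \<beta> where "\<beta> u = b*V u/(1+\<alpha>*V u)" for u
  define \<gamma> where "\<gamma> u = b*T u/(1+\<alpha>*V u)" for u
  define Fb where "Fb u = \<bar>k1 u\<bar> + \<bar>k2 u\<bar> + \<bar>\<beta> u\<bar> + \<bar>\<gamma> u\<bar> + p + c + 1" for u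
  have cT: "continuous_on J0 T" and cI: "continuous_on J0 I" and cV: "continuous_on J0 V"
    using contT contI contV J0sub by (auto intro: continuous_on_subset)
  have dnz: "\<forall>u\<in>J0. 1 + \<alpha> * V u \<noteq> 0" using den by force
  have "continuous_on J0 Fb" unfolding Fb_def k1_def k2_def \<beta>_def \<gamma>_def
    using cT cI cV dnz Tm by (auto intro!: continuous_intros)
  moreover have "compact J0" "J0 \<noteq> {}" using \<eta>0 by (auto simp: J0_def)
  ultimately obtain xm where xm: "xm \<in> J0" "\<And>y. y \<in> J0 \<Longrightarrow> Fb y \<le> Fb xm"
    using continuous_attains_sup[of J0 Fb] by blast
  define Km where "Km = Fb xm"
  have Kb: "\<bar>k1 u\<bar> \<le> Km" "\<bar>k2 u\<bar> \<le> Km" "\<bar>\<beta> u\<bar> \<le> Km" "\<bar>\<gamma> u\<bar> \<le> Km" "p \<le> Km"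
    if "u \<in> J0" for u
    using xm(2)[OF that] p c abs_ge_zero[of "k1 u"] abs_ge_zero[of "k2 u"] abs_ge_zero[of "\<beta> u"]
      abs_ge_zero[of "\<gamma> u"] unfolding Km_def Fb_def by linarith+
  have Km1: "Km \<ge> 1" using xm(2)[OF xm(1)] p c unfolding Km_def Fb_def by simp
  define \<eta> where "\<eta> = min (if \<tau> > 0 then min \<tau> (\<eta>0/2) else \<eta>0/2) (1/(8*Km))"
  have \<eta>pos: "\<eta> > 0" using \<eta>0 Km1 by (auto simp: \<eta>_def)
  have \<eta>le: "\<eta> \<le> \<eta>0/2" by (auto simp: \<eta>_def)
  have \<eta>tau: "\<tau> > 0 \<Longrightarrow> \<eta> \<le> \<tau>" by (auto simp: \<eta>_def)
  have \<eta>K: "\<eta> * Km \<le> 1/8"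
  proof -
    have "\<eta> \<le> 1/(8*Km)" by (simp add: \<eta>_def)
    then have "\<eta> * Km \<le> 1/(8*Km) * Km" using Km1 by (intro mult_right_mono) auto
    then show ?thesis using Km1 by simp
  qed
  define J where "J = {ts..ts+\<eta>}"
  have JJ0: "J \<subseteq> J0" using \<eta>le by (auto simp: J_def J0_def)
  define N where "N u = max 0 (-T u) + max 0 (-I u) + max 0 (-V u)" for u
  have "continuous_on J N" unfolding N_def using cT cI cV JJ0
    by (auto intro!: continuous_intros intro: continuous_on_subset)
  moreover have "compact J" "J \<noteq> {}" using \<eta>pos by (auto simp: J_def)
  ultimately obtain um where um: "um \<in> J" "\<And>y. y \<in> J \<Longrightarrow> N y \<le> N um"
    using continuous_attains_sup[of J N] by blast
  define M where "M = N um"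
  have M0: "M \<ge> 0" by (simp add: M_def N_def)
  have bT: "\<bar>T u\<bar> \<le> M" if "u \<in> J" "T u < 0" for u
    using um(2)[OF that(1)] that(2) unfolding M_def N_def by auto
  have bI: "\<bar>I u\<bar> \<le> M" if "u \<in> J" "I u < 0" for u
    using um(2)[OF that(1)] that(2) unfolding M_def N_def by auto
  have bV: "\<bar>V u\<bar> \<le> M" if "u \<in> J" "V u < 0" for u
    using um(2)[OF that(1)] that(2) unfolding M_def N_def by auto
  have KM0: "Km * M \<ge> 0" using Km1 M0 by simp
  define B where "B = 2 * Km * M"
  have B0: "B \<ge> 0" using KM0 by (simp add: B_def)
  have inJ: "u \<in> J" "u \<in> J0" "u > 0" if "ts < u" "u < ts + \<eta>" for u
    using that JJ0 ts by (auto simp: J_def)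
  have contJ: "continuous_on {ts..ts+\<eta>} T" "continuous_on {ts..ts+\<eta>} I" "continuous_on {ts..ts+\<eta>} V"
    using cT cI cV JJ0 unfolding J_def by (auto intro: continuous_on_subset)
  have ab: "ts \<le> ts + \<eta>" using \<eta>pos by simp
  have lT: "T u \<ge> -B * \<eta>" if "u \<in> J" for u
  proof -
    have "T u \<ge> -B * ((ts + \<eta>) - ts)"
    proof (rule neg_lb[OF ab contJ(1), where
          x'="\<lambda>u. s - d * T u + a * T u * (1 - (T u + I u) / Tmax) - b * T u * V u / (1 + \<alpha> * V u)"])
      fix t assume t: "ts < t" "t < ts + \<eta>"
      show "(T has_real_derivative (s - d * T t + a * T t * (1 - (T t + I t) / Tmax) - b * T t * V t / (1 + \<alpha> * V t))) (at t)" using derT[of t] inJ[OF t] by simp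
    next
      fix t assume t: "ts < t" "t < ts + \<eta>" "T t < 0"
      have eq: "s - d * T t + a * T t * (1 - (T t + I t) / Tmax) - b * T t * V t / (1 + \<alpha> * V t)
          = s + T t * k1 t" unfolding k1_def by (simp add: algebra_simps)
      have "T t * k1 t \<ge> -(M * Km)" using inJ[OF t(1,2)] t(3) bT Kb by (intro prod_lb) auto
      then show "s - d * T t + a * T t * (1 - (T t + I t) / Tmax) - b * T t * V t / (1 + \<alpha> * V t) \<ge> -B"
        unfolding eq B_def using s KM0 by (simp add: algebra_simps)
    qed (use nn[of ts] ts tau B0 that in \<open>auto simp: J_def\<close>)
    then show ?thesis by simp
  qed
  have lV: "V u \<ge> -B * \<eta>" if "u \<in> J" for u
  proof -
    have "V u \<ge> -B * ((ts + \<eta>) - ts)"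
    proof (rule neg_lb[OF ab contJ(3), where x'="\<lambda>u. p * I u - c * V u"])
      fix t assume t: "ts < t" "t < ts + \<eta>"
      show "(V has_real_derivative (p * I t - c * V t)) (at t)" using derV[of t] inJ[OF t] by simp
    next
      fix t assume t: "ts < t" "t < ts + \<eta>" "V t < 0"
      have "p * I t \<ge> -(Km * M)"
      proof (cases "I t < 0")
        case True
        then show ?thesis using inJ[OF t(1,2)] bI Kb p by (intro prod_lb) auto
      next
        case False
        then have "p * I t \<ge> 0" using p by simp
        then show ?thesis using KM0 by linarith
      qed
      moreover have "c * V t < 0" by (rule mult_pos_neg[OF c t(3)])
      ultimately show "p * I t - c * V t \<ge> -B" unfolding B_def using KM0 by linarith
    qed (use nn[of ts] ts tau B0 that in \<open>auto simp: J_def\<close>)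
    then show ?thesis by simp
  qed
  have lI: "I u \<ge> -B * \<eta>" if "u \<in> J" for u
  proof -
    have "I u \<ge> -B * ((ts + \<eta>) - ts)"
    proof (rule neg_lb[OF ab contJ(2), where x'="\<lambda>u. b * T (u - \<tau>) * V (u - \<tau>) / (1 + \<alpha> * V (u - \<tau>))
            + a * I u * (1 - (T u + I u) / Tmax) - \<mu> * I u"])
      fix t assume t: "ts < t" "t < ts + \<eta>"
      show "(I has_real_derivative (b * T (t - \<tau>) * V (t - \<tau>) / (1 + \<alpha> * V (t - \<tau>))
            + a * I t * (1 - (T t + I t) / Tmax) - \<mu> * I t)) (at t)" using derI[of t] inJ[OF t] by simp
    next
      fix t assume t: "ts < t" "t < ts + \<eta>" "I t < 0"
      note tJ = inJ[OF t(1,2)]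
      have D: "b * T (t - \<tau>) * V (t - \<tau>) / (1 + \<alpha> * V (t - \<tau>)) \<ge> -(M * Km)"
      proof (cases "\<tau> > 0")
        case True
        then have "t - \<tau> \<in> {-\<tau>..ts}" using \<eta>tau t tJ by auto
        then have "T (t - \<tau>) \<ge> 0" "V (t - \<tau>) \<ge> 0" using nn by auto
        then have "b * T (t - \<tau>) * V (t - \<tau>) / (1 + \<alpha> * V (t - \<tau>)) \<ge> 0"
          using b al by (intro divide_nonneg_nonneg mult_nonneg_nonneg) auto
        then show ?thesis using KM0 by (simp add: mult.commute)
      next
        case False
        then have t0: "\<tau> = 0" using tau by simp
        show ?thesis
        proof (cases "T t < 0")
          case True
          have "b * T t * V t / (1 + \<alpha> * V t) = T t * \<beta> t" by (simp add: \<beta>_def)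
          moreover have "T t * \<beta> t \<ge> -(M * Km)" using tJ True bT Kb by (intro prod_lb) auto
          ultimately show ?thesis using t0 by simp
        next
          case Tn: False
          show ?thesis
          proof (cases "V t < 0")
            case True
            have "b * T t * V t / (1 + \<alpha> * V t) = V t * \<gamma> t" by (simp add: \<gamma>_def)
            moreover have "V t * \<gamma> t \<ge> -(M * Km)" using tJ True bV Kb by (intro prod_lb) auto
            ultimately show ?thesis using t0 by simp
          next
            case False
            have "b * T t * V t / (1 + \<alpha> * V t) \<ge> 0"
              using b Tn False den[of t] tJ by (intro divide_nonneg_nonneg mult_nonneg_nonneg) auto
            then show ?thesis using t0 KM0 by (simp add: mult.commute)
          qed
        qed
      qed
      have eq: "a * I t * (1 - (T t + I t) / Tmax) - \<mu> * I t = I t * k2 t"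
        unfolding k2_def by (simp add: algebra_simps)
      have "I t * k2 t \<ge> -(M * Km)" using tJ t(3) bI Kb by (intro prod_lb) auto
      then show "b * T (t - \<tau>) * V (t - \<tau>) / (1 + \<alpha> * V (t - \<tau>))
            + a * I t * (1 - (T t + I t) / Tmax) - \<mu> * I t \<ge> -B"
      proof -
        have "2 * Km * M = M * Km + M * Km" by (simp add: algebra_simps)
        then show ?thesis using D eq \<open>I t * k2 t \<ge> -(M * Km)\<close> unfolding B_def by linarith
      qed
    qed (use nn[of ts] ts tau B0 that in \<open>auto simp: J_def\<close>)
    then show ?thesis by simp
  qed
  have Bq: "B * \<eta> \<le> M / 4"
  proof -
    have "B * \<eta> = 2 * M * (\<eta> * Km)" by (simp add: B_def algebra_simps)
    also have "\<dots> \<le> 2 * M * (1/8)" using \<eta>K M0 by (intro mult_left_mono) auto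
    finally show ?thesis by simp
  qed
  have "N um \<le> 3 * M / 4"
    using lT[OF um(1)] lI[OF um(1)] lV[OF um(1)] Bq M0 unfolding N_def by auto
  then have M00: "M = 0" using M0 unfolding M_def by simp
  have "\<forall>u\<in>{ts..ts+\<eta>}. T u \<ge> 0 \<and> I u \<ge> 0 \<and> V u \<ge> 0"
  proof
    fix u assume "u \<in> {ts..ts+\<eta>}"
    then have "N u \<le> 0" using um(2)[of u] M00 unfolding M_def J_def by auto
    then show "T u \<ge> 0 \<and> I u \<ge> 0 \<and> V u \<ge> 0" unfolding N_def by auto
  qed
  then show ?thesis using \<eta>pos by blast
qed

end




lemma lyap_alg:
  fixes s d a Tmax b \<alpha> \<mu> p c K x y z w :: real
  assumes K: "K > 0" and x: "x > 0" and z: "z \<ge> 0" and y: "y \<ge> 0" and Tm: "Tmax > 0"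
    and c: "c > 0" and al: "\<alpha> > 0"
    and hK: "s - d*K + a*K*(1-K/Tmax) = 0" and hR: "b*p*K/c + a*(1-K/Tmax) \<le> \<mu>"
  shows "(1 - K/x) * (s - d*x + a*x*(1-(x+y)/Tmax) - b*x*z/(1+\<alpha>*z))
       + (w + a*y*(1-(x+y)/Tmax) - \<mu>*y) + b*K/c*(p*y - c*z) + (b*x*z/(1+\<alpha>*z) - w)
       \<le> -(a/Tmax)*(x-K+y)^2 - s*(x-K)^2/(K*x) - b*K*\<alpha>*z^2/(1+\<alpha>*z)"
proof -
  have s: "s = d*K - a*K*(1-K/Tmax)" using hK by linarith
  have den: "1 + \<alpha>*z > 0" using al z by (simp add: add_pos_nonneg)
  define h where "h = b*z/(1+\<alpha>*z)"
  have e1: "b*x*z/(1+\<alpha>*z) = x*h" by (simp add: h_def)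
  have e2: "b*K*\<alpha>*z^2/(1+\<alpha>*z) = b*K*z - K*h"
    using den by (simp add: h_def field_simps power2_eq_square)
  have e3: "(1 - K/x) * (s - d*x + a*x*(1-x/Tmax)) = - s*(x-K)^2/(K*x) - (a/Tmax)*(x-K)^2"
    unfolding s using K x Tm
    by (simp add: field_simps power2_eq_square)
  have e4: "(1 - K/x) * (s - d*x + a*x*(1-(x+y)/Tmax) - x*h)
      = (1 - K/x) * (s - d*x + a*x*(1-x/Tmax)) - (x-K)*a*y/Tmax - x*h + K*h"
    using x Tm by (simp add: field_simps)
  have eq: "(1 - K/x) * (s - d*x + a*x*(1-(x+y)/Tmax) - b*x*z/(1+\<alpha>*z))
       + (w + a*y*(1-(x+y)/Tmax) - \<mu>*y) + b*K/c*(p*y - c*z) + (b*x*z/(1+\<alpha>*z) - w)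
       = -(a/Tmax)*(x-K+y)^2 - s*(x-K)^2/(K*x) - b*K*\<alpha>*z^2/(1+\<alpha>*z)
         + (b*p*K/c + a*(1-K/Tmax) - \<mu>)*y"
    unfolding e1 e2 e4 e3 using Tm c K x by (simp add: field_simps power2_eq_square)
  have "(b*p*K/c + a*(1-K/Tmax) - \<mu>)*y \<le> 0" using hR y by (simp add: mult_nonpos_nonneg)
  then show ?thesis unfolding eq by linarith
qed

context sys begin

lemma nonneg:
  assumes t: "t \<ge> -\<tau>"
  shows "T t \<ge> 0 \<and> I t \<ge> 0 \<and> V t \<ge> 0"
proof (rule ccontr)
  assume nt: "\<not> ?thesis"
  define Bs where "Bs = {u. u \<ge> 0 \<and> \<not> (T u \<ge> 0 \<and> I u \<ge> 0 \<and> V u \<ge> 0)}"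
  have tB: "t \<in> Bs"
  proof -
    have "t \<ge> 0"
    proof (rule ccontr)
      assume "\<not> t \<ge> 0"
      then have "t \<in> {-\<tau>..0}" using t by simp
      then show False using init nt by blast
    qed
    then show ?thesis using nt by (simp add: Bs_def)
  qed
  have bdd: "bdd_below Bs" by (auto simp: Bs_def intro: bdd_belowI[of _ 0])
  define ts where "ts = Inf Bs"
  have ts0: "ts \<ge> 0" unfolding ts_def using tB by (intro cInf_greatest) (auto simp: Bs_def)
  have below: "T u \<ge> 0 \<and> I u \<ge> 0 \<and> V u \<ge> 0" if "u \<in> {-\<tau>..<ts}" for u
  proof (cases "u < 0")
    case True then show ?thesis using init that by auto
  next
    case False
    have "u \<notin> Bs"
    proof
      assume "u \<in> Bs"
      then have "ts \<le> u" unfolding ts_def using bdd by (simp add: cInf_lower)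
      then show False using that by simp
    qed
    then show ?thesis using False by (simp add: Bs_def)
  qed
  have atts: "T ts \<ge> 0 \<and> I ts \<ge> 0 \<and> V ts \<ge> 0"
  proof (cases "ts = 0")
    case True then show ?thesis using init tau by simp
  next
    case False
    then have tsp: "ts > 0" using ts0 by simp
    define m where "m u = min (T u) (min (I u) (V u))" for u
    have sub: "{0..ts} \<subseteq> {-\<tau>..}" using tau by auto
    have cm: "continuous_on {0..ts} m" unfolding m_def
      using contT contI contV sub by (auto intro!: continuous_intros intro: continuous_on_subset)
    have cl: "closed {u \<in> {0..ts}. (\<lambda>_. 0) u \<le> m u}"
      by (rule continuous_on_closed_Collect_le) (auto intro: cm)
    have "{0..<ts} \<subseteq> {u \<in> {0..ts}. (\<lambda>_. 0) u \<le> m u}"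
      using below tau by (auto simp: m_def)
    then have "closure {0..<ts} \<subseteq> {u \<in> {0..ts}. (\<lambda>_. 0) u \<le> m u}"
      using cl by (rule closure_minimal)
    moreover have "ts \<in> closure {0..<ts}" using tsp by simp
    ultimately show ?thesis by (auto simp: m_def)
  qed
  have nn: "T u \<ge> 0 \<and> I u \<ge> 0 \<and> V u \<ge> 0" if "u \<in> {-\<tau>..ts}" for u
    using below[of u] atts that by (cases "u = ts") auto
  obtain \<eta> where \<eta>: "\<eta> > 0" "\<forall>u\<in>{ts..ts+\<eta>}. T u \<ge> 0 \<and> I u \<ge> 0 \<and> V u \<ge> 0"
    using local_nonneg[OF ts0 nn] by blast
  have "Inf Bs < ts + \<eta>" using \<eta> by (simp add: ts_def)
  then obtain u where u: "u \<in> Bs" "u < ts + \<eta>" using tB bdd cInf_less_iff[of Bs "ts + \<eta>"] by blast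
  have "ts \<le> u" using u bdd unfolding ts_def by (simp add: cInf_lower)
  then show False using u \<eta> by (auto simp: Bs_def)
qed

lemma Tpos:
  assumes t: "t > 0"
  shows "T t > 0"
proof (rule ccontr)
  assume "\<not> T t > 0"
  then have T0: "T t = 0" using nonneg[of t] t tau by simp
  have "s - d * T t + a * T t * (1 - (T t + I t) / Tmax) - b * T t * V t / (1 + \<alpha> * V t) = 0"
  proof (rule DERIV_local_min[OF derT[OF t] t])
    show "\<forall>y. \<bar>t - y\<bar> < t \<longrightarrow> T t \<le> T y"
    proof (intro allI impI)
      fix y assume "\<bar>t - y\<bar> < t"
      then have "y \<ge> -\<tau>" using tau by linarith
      then show "T t \<le> T y" using nonneg[of y] T0 by simp
    qed
  qed
  then show False using T0 s by simp
qed

end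




lemma ln_lt:
  fixes y :: real assumes y: "y > 0" "y \<noteq> 1" shows "ln y < y - 1"
proof -
  define r where "r = sqrt y"
  have r: "r > 0" "r^2 = y" using y by (auto simp: r_def)
  have "r \<noteq> 1" using y r by auto
  have "ln y = 2 * ln r" using y by (simp add: r_def ln_sqrt)
  also have "\<dots> \<le> 2 * (r - 1)" using ln_le_minus_one[OF r(1)] by simp
  also have "\<dots> < y - 1"
  proof -
    have "(r - 1)^2 > 0" using \<open>r \<noteq> 1\<close> by simp
    then show ?thesis using r(2) by (simp add: power2_eq_square algebra_simps)
  qed
  finally show ?thesis .
qed

lemma ln_half:
  fixes y :: real assumes y: "y > 0" shows "ln y \<le> y / 2"
proof -
  define r where "r = sqrt y"
  have r: "r > 0" "r^2 = y" using y by (auto simp: r_def)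
  have "ln y = 2 * ln r" using y by (simp add: r_def ln_sqrt)
  also have "\<dots> \<le> 2 * (r - 1)" using ln_le_minus_one[OF r(1)] by simp
  also have "\<dots> \<le> y / 2"
  proof -
    have "(r - 2)^2 \<ge> 0" by simp
    then show ?thesis using r(2) by (simp add: power2_eq_square algebra_simps)
  qed
  finally show ?thesis .
qed

context sys begin

definition Ke where "Ke = T0_eq s d a Tmax"

lemma Ke_pos: "Ke > 0" using T0_props(1)[OF s a Tm] by (simp add: Ke_def)
lemma Ke_eq: "s - d*Ke + a*Ke*(1-Ke/Tmax) = 0" using T0_props(2)[OF s a Tm] by (simp add: Ke_def)

definition G where "G = (\<lambda>u. b * T u * V u / (1 + \<alpha> * V u))"

lemma den_pos: "u \<ge> -\<tau> \<Longrightarrow> 1 + \<alpha> * V u > 0"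
  using nonneg[of u] al by (simp add: add_pos_nonneg)

lemma G_nn: "u \<ge> -\<tau> \<Longrightarrow> G u \<ge> 0"
  using nonneg[of u] den_pos[of u] b unfolding G_def by (simp add: divide_nonneg_pos)

lemma G_cont: "continuous_on {-\<tau>..} G"
proof -
  have "\<forall>u\<in>{-\<tau>..}. 1 + \<alpha> * V u \<noteq> 0" using den_pos by force
  then show ?thesis unfolding G_def using contT contV by (auto intro!: continuous_intros)
qed

definition F where "F = (\<lambda>x. integral {-\<tau>..x} G)"

lemma F_der_within: "x \<ge> -\<tau> \<Longrightarrow> (F has_real_derivative G x) (at x within {-\<tau>..})"
proof -
  assume x: "x \<ge> -\<tau>"
  have "(F has_real_derivative G x) (at x within {-\<tau>..x+1})"
    unfolding F_def using G_cont x by (intro integral_has_real_derivative) (auto intro: continuous_on_subset)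
  moreover have "at x within {-\<tau>..x+1} = at x within {-\<tau>..}"
    by (rule at_within_nhd[of x "{..<x+1}"]) auto
  ultimately show ?thesis by simp
qed

lemma F_cont: "continuous_on {-\<tau>..} F"
  by (rule DERIV_continuous_on[OF F_der_within]) simp

lemma F_der: "x > -\<tau> \<Longrightarrow> (F has_real_derivative G x) (at x)"
proof -
  assume x: "x > -\<tau>"
  have "at x within {-\<tau>..} = at x"
    by (rule at_within_interior) (use x in \<open>simp add: interior_real_atLeast\<close>)
  then show ?thesis using F_der_within[of x] x by simp
qed

definition W where "W = (\<lambda>t. F t - F (t - \<tau>))"

lemma W_der: "t > 0 \<Longrightarrow> (W has_real_derivative G t - G (t - \<tau>)) (at t)"
proof -
  assume t: "t > 0"
  have 1: "(F has_real_derivative G t) (at t)" using F_der[of t] t tau by simp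
  have "((\<lambda>t. F (t - \<tau>)) has_real_derivative G (t - \<tau>) * 1) (at t)"
    by (rule DERIV_chain2[OF F_der]) (use t in \<open>auto intro!: derivative_eq_intros\<close>)
  then show ?thesis unfolding W_def using 1 by (auto intro!: derivative_eq_intros)
qed

lemma W_cont: "continuous_on {0..} W"
proof -
  have "continuous_on {0..} F" using F_cont tau by (auto intro: continuous_on_subset)
  moreover have "continuous_on {0..} (\<lambda>t. F (t - \<tau>))"
    by (rule continuous_on_compose2[OF F_cont]) (auto intro!: continuous_intros)
  ultimately show ?thesis unfolding W_def by (auto intro!: continuous_intros)
qed

lemma W_int: "t \<ge> 0 \<Longrightarrow> W t = integral {t - \<tau>..t} G"
proof -
  assume t: "t \<ge> 0"
  have "G integrable_on {-\<tau>..t}"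
    using G_cont by (intro integrable_continuous_real) (auto intro: continuous_on_subset)
  then have "integral {-\<tau>..t-\<tau>} G + integral {t-\<tau>..t} G = integral {-\<tau>..t} G"
    using t tau by (intro Henstock_Kurzweil_Integration.integral_combine) auto
  then show ?thesis unfolding W_def F_def by simp
qed

lemma W_nn: "t \<ge> 0 \<Longrightarrow> W t \<ge> 0"
proof -
  assume t: "t \<ge> 0"
  have "{t-\<tau>..t} \<subseteq> {-\<tau>..}" using t by auto
  then have "G integrable_on {t-\<tau>..t}"
    using G_cont by (intro integrable_continuous_real) (auto intro: continuous_on_subset)
  then show ?thesis unfolding W_int[OF t]
    by (rule Henstock_Kurzweil_Integration.integral_nonneg) (use G_nn t in auto)
qed

lemma W0_bound:
  assumes m: "\<And>u. u \<in> {-\<tau>..0} \<Longrightarrow> G u \<le> m"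
  shows "W 0 \<le> \<tau> * m"
proof -
  have "G integrable_on {-\<tau>..0}"
    using G_cont by (intro integrable_continuous_real) (auto intro: continuous_on_subset)
  then have "integral {-\<tau>..0} G \<le> integral {-\<tau>..0} (\<lambda>_. m)"
    by (rule integral_le) (use m in auto)
  then show ?thesis using W_int[of 0] tau by (simp add: content_real)
qed

definition \<phi> where "\<phi> = (\<lambda>x. x - Ke - Ke * ln (x / Ke))"

lemma \<phi>_nn: "x > 0 \<Longrightarrow> \<phi> x \<ge> 0"
proof -
  assume x: "x > 0"
  have "ln (x / Ke) \<le> x / Ke - 1" using x Ke_pos by (intro ln_le_minus_one) simp
  then have "Ke * ln (x / Ke) \<le> Ke * (x / Ke - 1)" using Ke_pos by (intro mult_left_mono) auto
  moreover have "Ke * (x / Ke - 1) = x - Ke" using Ke_pos by (simp add: field_simps)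
  ultimately show ?thesis by (simp add: \<phi>_def)
qed

lemma \<phi>_pos: "x > 0 \<Longrightarrow> x \<noteq> Ke \<Longrightarrow> \<phi> x > 0"
proof -
  assume x: "x > 0" "x \<noteq> Ke"
  have "ln (x / Ke) < x / Ke - 1" using x Ke_pos by (intro ln_lt) auto
  then have "Ke * ln (x / Ke) < Ke * (x / Ke - 1)" using Ke_pos by (intro mult_strict_left_mono) auto
  moreover have "Ke * (x / Ke - 1) = x - Ke" using Ke_pos by (simp add: field_simps)
  ultimately show ?thesis by (simp add: \<phi>_def)
qed

lemma \<phi>_ln: "x > 0 \<Longrightarrow> \<phi> x = x - Ke - Ke * (ln x - ln Ke)"
  using Ke_pos by (simp add: \<phi>_def ln_div)

lemma \<phi>_up: assumes "Ke \<le> y" "y \<le> x" shows "\<phi> y \<le> \<phi> x"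
proof -
  have y: "y > 0" using assms Ke_pos by simp
  have x: "x > 0" using assms y by simp
  have "ln (x / y) \<le> x / y - 1" using x y by (intro ln_le_minus_one) simp
  then have "ln x - ln y \<le> x / y - 1" using x y by (simp add: ln_div)
  then have "Ke * (ln x - ln y) \<le> Ke * (x / y - 1)" using Ke_pos by (intro mult_left_mono) auto
  moreover have "Ke * (x / y - 1) \<le> x - y"
  proof -
    have "Ke * (x / y - 1) = (x - y) * (Ke / y)" using y by (simp add: field_simps)
    also have "\<dots> \<le> (x - y) * 1" using assms y by (intro mult_left_mono) auto
    finally show ?thesis by simp
  qed
  ultimately show ?thesis unfolding \<phi>_ln[OF x] \<phi>_ln[OF y] by (simp add: algebra_simps)
qed

lemma \<phi>_down: assumes "0 < x" "x \<le> y" "y \<le> Ke" shows "\<phi> y \<le> \<phi> x"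
proof -
  have y: "y > 0" using assms by simp
  have x: "x > 0" using assms by simp
  have "ln (x / y) \<le> x / y - 1" using x y by (intro ln_le_minus_one) simp
  then have "ln x - ln y \<le> x / y - 1" using x y by (simp add: ln_div)
  then have "Ke * (ln x - ln y) \<le> Ke * (x / y - 1)" using Ke_pos by (intro mult_left_mono) auto
  moreover have "Ke * (x / y - 1) \<le> x - y"
  proof -
    have "Ke * (x / y - 1) = (y - x) * (- Ke / y)" using y by (simp add: field_simps)
    also have "\<dots> \<le> (y - x) * (-1)" using assms y by (intro mult_left_mono) (auto simp: field_simps)
    finally show ?thesis by simp
  qed
  ultimately show ?thesis unfolding \<phi>_ln[OF x] \<phi>_ln[OF y] by (simp add: algebra_simps)
qed

lemma \<phi>_upper: "x > 0 \<Longrightarrow> \<phi> x \<le> (x - Ke)^2 / x"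
proof -
  assume x: "x > 0"
  have "ln (Ke / x) \<le> Ke / x - 1" using x Ke_pos by (intro ln_le_minus_one) simp
  then have "ln Ke - ln x \<le> Ke / x - 1" using x Ke_pos by (simp add: ln_div)
  then have "Ke * (ln Ke - ln x) \<le> Ke * (Ke / x - 1)" using Ke_pos by (intro mult_left_mono) auto
  moreover have "(x - Ke)^2 / x = x - Ke + Ke * (Ke / x - 1)" using x
    by (simp add: field_simps power2_eq_square)
  ultimately show ?thesis unfolding \<phi>_ln[OF x] by (simp add: algebra_simps)
qed

lemma \<phi>_lower: "x > 0 \<Longrightarrow> \<phi> x \<ge> x / 2 - Ke"
proof -
  assume x: "x > 0"
  have "ln (x / Ke) \<le> (x / Ke) / 2" using x Ke_pos by (intro ln_half) simp
  then have "Ke * ln (x / Ke) \<le> Ke * ((x / Ke) / 2)" using Ke_pos by (intro mult_left_mono) auto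
  then show ?thesis using Ke_pos by (simp add: \<phi>_def field_simps)
qed

lemma \<phi>_der: "x > 0 \<Longrightarrow> (\<phi> has_real_derivative (1 - Ke / x)) (at x)"
  unfolding \<phi>_def using Ke_pos
  by (auto intro!: derivative_eq_intros simp: field_simps)

definition Lf where "Lf = (\<lambda>t. \<phi> (T t) + I t + (b * Ke / c) * V t + W t)"

lemma Lf_nn: "t \<ge> 0 \<Longrightarrow> T t > 0 \<Longrightarrow> Lf t \<ge> 0"
  using \<phi>_nn[of "T t"] nonneg[of t] W_nn[of t] tau b c Ke_pos unfolding Lf_def
  by (simp add: add_nonneg_nonneg)

lemma Lf_der:
  assumes t: "t > 0"
  shows "(Lf has_real_derivative
      ((1 - Ke / T t) * (s - d * T t + a * T t * (1 - (T t + I t) / Tmax) - b * T t * V t / (1 + \<alpha> * V t))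
       + (b * T (t - \<tau>) * V (t - \<tau>) / (1 + \<alpha> * V (t - \<tau>))
            + a * I t * (1 - (T t + I t) / Tmax) - \<mu> * I t)
       + b * Ke / c * (p * I t - c * V t)
       + (b * T t * V t / (1 + \<alpha> * V t) - b * T (t - \<tau>) * V (t - \<tau>) / (1 + \<alpha> * V (t - \<tau>))))) (at t)"
proof -
  have 1: "((\<lambda>t. \<phi> (T t)) has_real_derivative (1 - Ke / T t) *
      (s - d * T t + a * T t * (1 - (T t + I t) / Tmax) - b * T t * V t / (1 + \<alpha> * V t))) (at t)"
    by (rule DERIV_chain2[OF \<phi>_der[OF Tpos[OF t]] derT[OF t]])
  have 2: "((\<lambda>t. (b * Ke / c) * V t) has_real_derivative (b * Ke / c) * (p * I t - c * V t)) (at t)"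
    by (rule DERIV_cmult[OF derV[OF t]])
  have 3: "(W has_real_derivative (b * T t * V t / (1 + \<alpha> * V t) - b * T (t - \<tau>) * V (t - \<tau>) / (1 + \<alpha> * V (t - \<tau>)))) (at t)"
    using W_der[OF t] by (simp add: G_def)
  show ?thesis unfolding Lf_def
    by (intro DERIV_add 1 2 3 derI[OF t])
qed

lemma R0_le: "R0_num s d a Tmax b \<mu> p c \<le> 1 \<Longrightarrow> b*p*Ke/c + a*(1-Ke/Tmax) \<le> \<mu>"
proof -
  assume "R0_num s d a Tmax b \<mu> p c \<le> 1"
  then have "(1/\<mu>) * (b*p*Ke/c + a*(1-Ke/Tmax)) \<le> 1" by (simp add: R0_num_def Ke_def)
  then show ?thesis using mu by (simp add: field_simps)
qed

lemma Lf_der_le: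
  assumes t: "t > 0" and R: "R0_num s d a Tmax b \<mu> p c \<le> 1"
  shows "((1 - Ke / T t) * (s - d * T t + a * T t * (1 - (T t + I t) / Tmax) - b * T t * V t / (1 + \<alpha> * V t))
       + (b * T (t - \<tau>) * V (t - \<tau>) / (1 + \<alpha> * V (t - \<tau>))
            + a * I t * (1 - (T t + I t) / Tmax) - \<mu> * I t)
       + b * Ke / c * (p * I t - c * V t)
       + (b * T t * V t / (1 + \<alpha> * V t) - b * T (t - \<tau>) * V (t - \<tau>) / (1 + \<alpha> * V (t - \<tau>))))
     \<le> -(a/Tmax)*(T t-Ke+I t)^2 - s*(T t-Ke)^2/(Ke*T t) - b*Ke*\<alpha>*(V t)^2/(1+\<alpha>*V t)"
  by (rule lyap_alg[OF Ke_pos Tpos[OF t] _ _ Tm c al Ke_eq R0_le[OF R]])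
     (use nonneg[of t] t tau in auto)

lemma Lf_cont:
  assumes t0: "t0 \<ge> 0" "T t0 > 0"
  shows "continuous_on {t0..} Lf"
proof -
  have pos: "\<forall>u\<in>{t0..}. T u / Ke > 0"
  proof
    fix u assume "u \<in> {t0..}"
    then have "T u > 0" using t0 Tpos[of u] by (cases "u = t0") auto
    then show "T u / Ke > 0" using Ke_pos by simp
  qed
  have sub: "{t0..} \<subseteq> {-\<tau>..}" "{t0..} \<subseteq> {0..}" using t0 tau by auto
  have cT: "continuous_on {t0..} T" and cI: "continuous_on {t0..} I" and cV: "continuous_on {t0..} V"
    and cW: "continuous_on {t0..} W"
    using contT contI contV W_cont sub by (auto intro: continuous_on_subset)
  have pos2: "\<forall>u\<in>{t0..}. T u \<noteq> 0"
  proof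
    fix u assume "u \<in> {t0..}"
    then have "T u / Ke > 0" using pos by blast
    then show "T u \<noteq> 0" by auto
  qed
  show ?thesis unfolding Lf_def \<phi>_def using cT cI cV cW pos pos2 c Ke_pos
    by (auto intro!: continuous_intros)
qed

end




lemma conv_barbalat:
  fixes L L' f f' :: "real \<Rightarrow> real"
  assumes cont: "continuous_on {t0..} L"
    and der: "\<And>t. t > t0 \<Longrightarrow> (L has_real_derivative L' t) (at t)"
    and Lg: "\<And>t. t > t0 \<Longrightarrow> L' t \<le> - k * (f t)^2"
    and Lnn: "\<And>t. t \<ge> t0 \<Longrightarrow> L t \<ge> 0"
    and k: "k > 0"
    and fcont: "continuous_on {t0..} f"
    and fder: "\<And>t. t > t0 \<Longrightarrow> (f has_real_derivative f' t) (at t)"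
    and fb: "\<And>t. t \<ge> t0 \<Longrightarrow> \<bar>f t\<bar> \<le> A"
    and f'b: "\<And>t. t > t0 \<Longrightarrow> \<bar>f' t\<bar> \<le> C"
    and e: "e > 0"
  shows "\<exists>N. \<forall>t\<ge>N. \<bar>f t\<bar> < e"
proof -
  have A0: "A \<ge> 0" using fb[of t0] by simp
  have C0: "C \<ge> 0" using f'b[of "t0 + 1"] by simp
  define M where "M = 2 * A * C + 1"
  have "A * C \<ge> 0" using A0 C0 by simp
  then have M: "M > 0" by (simp add: M_def)
  have lip: "\<bar>(f u)^2 - (f v)^2\<bar> \<le> M * \<bar>u - v\<bar>" if "u \<ge> t0" "v \<ge> t0" for u v
  proof -
    have l: "\<bar>f u - f v\<bar> \<le> C * \<bar>u - v\<bar>" by (rule lipschitz_deriv[OF fcont fder f'b that])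
    have "\<bar>(f u)^2 - (f v)^2\<bar> = \<bar>f u + f v\<bar> * \<bar>f u - f v\<bar>"
      by (simp add: power2_eq_square algebra_simps abs_mult[symmetric])
    also have "\<dots> \<le> (2 * A) * (C * \<bar>u - v\<bar>)"
    proof (rule mult_mono)
      show "\<bar>f u + f v\<bar> \<le> 2 * A" using fb[of u] fb[of v] that abs_triangle_ineq[of "f u" "f v"] by linarith
    qed (use l A0 in auto)
    also have "\<dots> \<le> M * \<bar>u - v\<bar>" unfolding M_def by (simp add: algebra_simps)
    finally show ?thesis .
  qed
  obtain N where N: "\<forall>t\<ge>N. (f t)^2 < e^2"
    using barbalat[OF cont der Lg Lnn _ k M lip, of "e^2"] e by auto
  have "\<forall>t\<ge>N. \<bar>f t\<bar> < e"
  proof (intro allI impI)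
    fix t assume "t \<ge> N"
    then have "(f t)^2 < e^2" using N by simp
    then have h: "\<bar>f t\<bar>^2 < e^2" by simp
    show "\<bar>f t\<bar> < e" using power_less_imp_less_base[OF h] e by simp
  qed
  then show ?thesis by blast
qed

lemma tendsto_from_eps:
  fixes f :: "real \<Rightarrow> real"
  assumes "\<And>e. e > 0 \<Longrightarrow> \<exists>N. \<forall>t\<ge>N. \<bar>f t - l\<bar> < e"
  shows "(f \<longlongrightarrow> l) at_top"
  unfolding tendsto_iff eventually_at_top_linorder dist_real_def using assms by blast

lemma bnd_A:
  fixes b \<alpha> x z B :: real
  assumes "b > 0" "\<alpha> > 0" "0 \<le> x" "x \<le> B" "0 \<le> z" "z \<le> B"
  shows "\<bar>b * x * z / (1 + \<alpha> * z)\<bar> \<le> b * B * B"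
proof -
  have den: "1 + \<alpha> * z \<ge> 1" using assms by simp
  have nn: "b * x * z \<ge> 0" using assms by simp
  have "b * x * z * 1 \<le> b * x * z * (1 + \<alpha> * z)" using den nn by (intro mult_left_mono) auto
  then have "b * x * z / (1 + \<alpha> * z) \<le> b * x * z" using den nn by (simp add: divide_le_eq)
  also have "\<dots> \<le> b * B * B" using assms by (intro mult_mono) auto
  finally show ?thesis using nn den by simp
qed

lemma bnd_B:
  fixes a Tmax x y w B :: real
  assumes "a > 0" "Tmax > 0" "0 \<le> x" "x \<le> B" "0 \<le> y" "y \<le> B" "0 \<le> w" "w \<le> B"
  shows "\<bar>a * x * (1 - (y + w) / Tmax)\<bar> \<le> a * B * (1 + 2 * B / Tmax)"
proof -
  have "\<bar>1 - (y + w) / Tmax\<bar> \<le> 1 + (y + w) / Tmax" using assms by (simp add: abs_le_iff)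
  also have "\<dots> \<le> 1 + 2 * B / Tmax" using assms by (simp add: divide_right_mono)
  finally have 1: "\<bar>1 - (y + w) / Tmax\<bar> \<le> 1 + 2 * B / Tmax" .
  have "\<bar>a * x * (1 - (y + w) / Tmax)\<bar> = (a * x) * \<bar>1 - (y + w) / Tmax\<bar>"
    using assms by (simp add: abs_mult)
  also have "\<dots> \<le> (a * B) * (1 + 2 * B / Tmax)" using 1 assms by (intro mult_mono) auto
  finally show ?thesis by simp
qed

definition phi0 :: "real \<Rightarrow> real \<Rightarrow> real" where "phi0 K x = x - K - K * ln (x / K)"

definition dlt :: "real \<Rightarrow> real \<Rightarrow> real \<Rightarrow> real \<Rightarrow> real \<Rightarrow> real \<Rightarrow> real \<Rightarrow> real \<Rightarrow> real" where
  "dlt s d a Tmax b c \<tau> \<epsilon> =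
    (let K = T0_eq s d a Tmax; e' = min \<epsilon> (K/2);
         \<eta> = min (min (phi0 K (K + e')) (phi0 K (K - e'))) (min \<epsilon> (b * K / c * \<epsilon>))
     in min (K/2) (\<eta> / (3 + b * K / c + 2 * \<tau> * b * K)))"

lemma phi0_pos: "K > 0 \<Longrightarrow> x > 0 \<Longrightarrow> x \<noteq> K \<Longrightarrow> phi0 K x > 0"
proof -
  assume K: "K > 0" and x: "x > 0" "x \<noteq> K"
  have "ln (x / K) < x / K - 1" using x K by (intro ln_lt) auto
  then have "K * ln (x / K) < K * (x / K - 1)" using K by (intro mult_strict_left_mono) auto
  moreover have "K * (x / K - 1) = x - K" using K by (simp add: field_simps)
  ultimately show ?thesis by (simp add: phi0_def)
qed

lemma dlt_pos:
  assumes s: "s > 0" and a: "a > 0" and Tm: "Tmax > 0" and b: "b > 0" and c: "c > 0"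
    and tau: "\<tau> \<ge> 0" and e: "\<epsilon> > 0"
  shows "dlt s d a Tmax b c \<tau> \<epsilon> > 0"
proof -
  define K where "K = T0_eq s d a Tmax"
  have K: "K > 0" using T0_props(1)[OF s a Tm] by (simp add: K_def)
  define e' where "e' = min \<epsilon> (K/2)"
  have e': "e' > 0" "e' \<le> K/2" using e K by (auto simp: e'_def)
  have p1: "phi0 K (K + e') > 0" using K e' by (intro phi0_pos) auto
  have p2: "phi0 K (K - e') > 0" using K e' by (intro phi0_pos) auto
  define \<eta> where "\<eta> = min (min (phi0 K (K + e')) (phi0 K (K - e'))) (min \<epsilon> (b * K / c * \<epsilon>))"
  have \<eta>: "\<eta> > 0" using p1 p2 e b c K by (simp add: \<eta>_def)
  have den: "3 + b * K / c + 2 * \<tau> * b * K > 0" using b c K tau by (simp add: add_pos_nonneg)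
  show ?thesis unfolding dlt_def Let_def K_def[symmetric] e'_def[symmetric] \<eta>_def[symmetric]
    using K \<eta> den by simp
qed

context sys begin

lemma \<phi>_phi0: "\<phi> x = phi0 Ke x" by (simp add: \<phi>_def phi0_def)

definition LD where "LD t =
      ((1 - Ke / T t) * (s - d * T t + a * T t * (1 - (T t + I t) / Tmax) - b * T t * V t / (1 + \<alpha> * V t))
       + (b * T (t - \<tau>) * V (t - \<tau>) / (1 + \<alpha> * V (t - \<tau>))
            + a * I t * (1 - (T t + I t) / Tmax) - \<mu> * I t)
       + b * Ke / c * (p * I t - c * V t)
       + (b * T t * V t / (1 + \<alpha> * V t) - b * T (t - \<tau>) * V (t - \<tau>) / (1 + \<alpha> * V (t - \<tau>))))"

lemma LD_der: "t > 0 \<Longrightarrow> (Lf has_real_derivative LD t) (at t)"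
  unfolding LD_def by (rule Lf_der)

lemma rhs_parts:
  assumes t: "t > 0"
  shows "s*(T t-Ke)^2/(Ke*T t) \<ge> 0" "b*Ke*\<alpha>*(V t)^2/(1+\<alpha>*V t) \<ge> 0" "(a/Tmax)*(T t-Ke+I t)^2 \<ge> 0"
  using s Ke_pos Tpos[OF t] b al a Tm den_pos[of t] t tau
  by (auto intro!: divide_nonneg_pos mult_nonneg_nonneg)

lemma LD_le:
  assumes t: "t > 0" and R: "R0_num s d a Tmax b \<mu> p c \<le> 1"
  shows "LD t \<le> -(a/Tmax)*(T t-Ke+I t)^2 - s*(T t-Ke)^2/(Ke*T t) - b*Ke*\<alpha>*(V t)^2/(1+\<alpha>*V t)"
  unfolding LD_def by (rule Lf_der_le[OF t R])

lemma LD_nonpos: "t > 0 \<Longrightarrow> R0_num s d a Tmax b \<mu> p c \<le> 1 \<Longrightarrow> LD t \<le> 0"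
  using LD_le[of t] rhs_parts[of t] by linarith

lemma Lf_mono:
  assumes R: "R0_num s d a Tmax b \<mu> p c \<le> 1" and t0: "t0 \<ge> 0" "T t0 > 0" and xy: "t0 \<le> x" "x \<le> y"
  shows "Lf y \<le> Lf x"
  by (rule nonincr_deriv[OF Lf_cont[OF t0] LD_der LD_nonpos[OF _ R] xy]) (use t0 in auto)

lemma stab:
  assumes R: "R0_num s d a Tmax b \<mu> p c \<le> 1" and e: "\<epsilon> > 0"
    and close: "\<forall>t\<in>{-\<tau>..0}. \<bar>T t - Ke\<bar> < dlt s d a Tmax b c \<tau> \<epsilon> \<and> \<bar>I t\<bar> < dlt s d a Tmax b c \<tau> \<epsilon>
                 \<and> \<bar>V t\<bar> < dlt s d a Tmax b c \<tau> \<epsilon>"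
    and t: "t \<ge> 0"
  shows "\<bar>T t - Ke\<bar> < \<epsilon> \<and> \<bar>I t\<bar> < \<epsilon> \<and> \<bar>V t\<bar> < \<epsilon>"
proof -
  define K where "K = Ke"
  have K: "K > 0" using Ke_pos by (simp add: K_def)
  define e' where "e' = min \<epsilon> (K/2)"
  have e': "e' > 0" "e' \<le> K/2" "e' \<le> \<epsilon>" using e K by (auto simp: e'_def)
  define \<eta> where "\<eta> = min (min (phi0 K (K + e')) (phi0 K (K - e'))) (min \<epsilon> (b * K / c * \<epsilon>))"
  define Q where "Q = 3 + b * K / c + 2 * \<tau> * b * K"
  have Q: "Q > 0" using b c K tau by (simp add: Q_def add_pos_nonneg)
  define \<delta> where "\<delta> = min (K/2) (\<eta> / Q)"
  have dd: "dlt s d a Tmax b c \<tau> \<epsilon> = \<delta>"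
    unfolding dlt_def Let_def \<delta>_def \<eta>_def e'_def Q_def K_def Ke_def by simp
  have \<delta>pos: "\<delta> > 0" using dlt_pos[where d=d, OF s a Tm b c tau e] dd by simp
  have \<delta>K: "\<delta> \<le> K/2" unfolding \<delta>_def by (rule min.cobounded1)
  have \<delta>Q: "\<delta> * Q \<le> \<eta>" using Q by (simp add: \<delta>_def min_def field_simps split: if_splits)
  note cl = close[unfolded dd K_def[symmetric]]
  have c0: "\<bar>T 0 - K\<bar> < \<delta>" "\<bar>I 0\<bar> < \<delta>" "\<bar>V 0\<bar> < \<delta>" using cl tau by auto
  have T0p: "T 0 \<ge> K/2" using c0 \<delta>K by linarith
  then have T0pos: "T 0 > 0" using K by linarith
  have ph0: "\<phi> (T 0) \<le> \<delta>"
  proof -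
    have "\<phi> (T 0) \<le> (T 0 - K)^2 / T 0" using \<phi>_upper[OF T0pos] by (simp add: K_def)
    also have "\<dots> \<le> \<delta>^2 / (K/2)"
    proof (rule frac_le)
      show "(T 0 - K)^2 \<le> \<delta>^2" using c0(1) \<delta>pos abs_le_square_iff[of "T 0 - K" \<delta>] by simp
    qed (use K T0p \<delta>pos in auto)
    also have "\<dots> = \<delta> * (\<delta> / (K/2))" by (simp add: power2_eq_square)
    also have "\<dots> \<le> \<delta> * 1" using \<delta>K \<delta>pos K by (intro mult_left_mono) auto
    finally show ?thesis by simp
  qed
  have Gb: "G u \<le> b * (2 * K) * \<delta>" if u: "u \<in> {-\<tau>..0}" for u
  proof -
    have nn: "T u \<ge> 0" "V u \<ge> 0" using init[OF u] by auto
    have cu: "\<bar>T u - K\<bar> < \<delta>" "\<bar>V u\<bar> < \<delta>" using cl u by auto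
    have "G u \<le> b * T u * V u"
    proof -
      have "1 + \<alpha> * V u \<ge> 1" using al nn by simp
      moreover have "b * T u * V u \<ge> 0" using b nn by simp
      ultimately have h: "b * T u * V u * 1 \<le> b * T u * V u * (1 + \<alpha> * V u)" by (intro mult_left_mono) auto
      have dpos: "1 + \<alpha> * V u > 0" using al nn by (simp add: add_pos_nonneg)
      show ?thesis unfolding G_def pos_divide_le_eq[OF dpos] using h by simp
    qed
    also have "\<dots> \<le> b * (2 * K) * \<delta>"
      using cu nn b \<delta>K by (intro mult_mono) auto
    finally show ?thesis .
  qed
  have W0: "W 0 \<le> \<tau> * (b * (2 * K) * \<delta>)" by (rule W0_bound[OF Gb])
  have L0: "Lf 0 < \<eta>"
  proof -
    have "Lf 0 = \<phi> (T 0) + I 0 + (b * K / c) * V 0 + W 0" by (simp add: Lf_def K_def)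
    also have "\<dots> < \<delta> + \<delta> + (b * K / c) * \<delta> + \<tau> * (b * (2 * K) * \<delta>)"
    proof -
      have "(b * K / c) * V 0 \<le> (b * K / c) * \<delta>" using c0 b c K by (intro mult_left_mono) auto
      then show ?thesis using ph0 c0 W0 by linarith
    qed
    also have "\<dots> \<le> \<delta> * Q" using \<delta>pos by (simp add: Q_def algebra_simps)
    finally show ?thesis using \<delta>Q by linarith
  qed
  have Lt: "Lf t < \<eta>" using Lf_mono[OF R order_refl T0pos _ t] L0 t by fastforce
  have Tt: "T t > 0" using t T0pos Tpos[of t] by (cases "t = 0") auto
  have nn: "I t \<ge> 0" "V t \<ge> 0" using nonneg[of t] t tau by auto
  have Wt: "W t \<ge> 0" using W_nn[OF t] .
  have ph: "\<phi> (T t) \<ge> 0" using \<phi>_nn[OF Tt] .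
  have Lt': "Lf t = \<phi> (T t) + I t + (b * K / c) * V t + W t" by (simp add: Lf_def K_def)
  have bKc: "b * K / c > 0" using b c K by simp
  have phi_t: "\<phi> (T t) < \<eta>" using Lt Lt' nn Wt bKc by (smt (verit) mult_nonneg_nonneg)
  have "\<bar>T t - K\<bar> < e'"
  proof (rule ccontr)
    assume "\<not> \<bar>T t - K\<bar> < e'"
    then consider "T t \<ge> K + e'" | "T t \<le> K - e'" by linarith
    then show False
    proof cases
      case 1
      have "\<phi> (K + e') \<le> \<phi> (T t)" using 1 e' by (intro \<phi>_up) (auto simp: K_def)
      moreover have "\<eta> \<le> phi0 K (K + e')" by (simp add: \<eta>_def)
      ultimately show False using phi_t by (simp add: \<phi>_phi0 K_def)
    next
      case 2
      have "\<phi> (K - e') \<le> \<phi> (T t)" using 2 e' Tt K by (intro \<phi>_down) (auto simp: K_def)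
      moreover have "\<eta> \<le> phi0 K (K - e')" by (simp add: \<eta>_def)
      ultimately show False using phi_t by (simp add: \<phi>_phi0 K_def)
    qed
  qed
  then have r1: "\<bar>T t - Ke\<bar> < \<epsilon>" using e' by (simp add: K_def)
  have "I t < \<eta>" using Lt Lt' nn Wt ph bKc by (smt (verit) mult_nonneg_nonneg)
  then have r2: "\<bar>I t\<bar> < \<epsilon>" using nn by (simp add: \<eta>_def)
  have "(b * K / c) * V t < \<eta>" using Lt Lt' nn Wt ph by linarith
  also have "\<eta> \<le> (b * K / c) * \<epsilon>" by (simp add: \<eta>_def)
  finally have "(b * K / c) * V t < (b * K / c) * \<epsilon>" .
  then have "V t < \<epsilon>" using bKc mult_less_cancel_left_pos by blast
  then have r3: "\<bar>V t\<bar> < \<epsilon>" using nn by simp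
  show ?thesis using r1 r2 r3 by simp
qed

end




lemma abs4: "\<bar>(x::real) - y + z - w\<bar> \<le> \<bar>x\<bar> + \<bar>y\<bar> + \<bar>z\<bar> + \<bar>w\<bar>" by linarith
lemma abs3: "\<bar>(x::real) + z - w\<bar> \<le> \<bar>x\<bar> + \<bar>z\<bar> + \<bar>w\<bar>" by linarith

context sys begin

lemma attr:
  assumes R: "R0_num s d a Tmax b \<mu> p c \<le> 1"
  shows "(T \<longlongrightarrow> Ke) at_top \<and> (I \<longlongrightarrow> 0) at_top \<and> (V \<longlongrightarrow> 0) at_top"
proof -
  define K where "K = Ke"
  have K: "K > 0" using Ke_pos by (simp add: K_def)
  have T1: "T 1 > 0" by (rule Tpos) simp
  define Lon where "Lon = Lf 1"
  have L1nn: "Lon \<ge> 0" unfolding Lon_def by (rule Lf_nn[OF _ T1]) simp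
  have Tp: "T t > 0" if "t \<ge> 1" for t using that by (intro Tpos) simp
  have nnt: "T t \<ge> 0" "I t \<ge> 0" "V t \<ge> 0" if "t \<ge> 1" for t using nonneg[of t] that tau by auto
  have Lle: "Lf t \<le> Lon" if "t \<ge> 1" for t
    unfolding Lon_def by (rule Lf_mono[OF R _ T1 order_refl that]) simp
  have bKc: "b * K / c > 0" using b c K by simp
  have parts: "\<phi> (T t) \<le> Lon" "I t \<le> Lon" "(b * K / c) * V t \<le> Lon" if "t \<ge> 1" for t
  proof -
    have "Lf t = \<phi> (T t) + I t + (b * K / c) * V t + W t" by (simp add: Lf_def K_def)
    moreover have "\<phi> (T t) \<ge> 0" using \<phi>_nn[OF Tp[OF that]] .
    moreover have "W t \<ge> 0" using W_nn that by simp
    moreover have "(b * K / c) * V t \<ge> 0" using bKc nnt(3)[OF that] by (rule mult_nonneg_nonneg[OF less_imp_le])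
    ultimately show "\<phi> (T t) \<le> Lon" "I t \<le> Lon" "(b * K / c) * V t \<le> Lon"
      using Lle[OF that] nnt[OF that] by linarith+
  qed
  have L1c: "Lon * c / (b * K) \<ge> 0" using L1nn b c K by simp
  define Lcq where "Lcq = Lon * c / (b * K)"
  have Lc0: "Lcq \<ge> 0" using L1c by (simp add: Lcq_def)
  define Bd where "Bd = 3 * Lon + Lcq + 2 * K + 1"
  have LB1: "Lon \<le> Bd" using Lc0 L1nn K unfolding Bd_def by linarith
  have LB2: "Lcq \<le> Bd" using Lc0 L1nn K unfolding Bd_def by linarith
  have LB3: "2 * Lon + 2 * K \<le> Bd" using Lc0 L1nn K unfolding Bd_def by linarith
  have bnds: "T t \<le> Bd" "I t \<le> Bd" "V t \<le> Bd" if "t \<ge> 1" for t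
  proof -
    have "T t / 2 - Ke \<le> Lon" using \<phi>_lower[OF Tp[OF that]] parts(1)[OF that] by linarith
    then show "T t \<le> Bd" using LB3 by (simp add: K_def)
    show "I t \<le> Bd" using parts(2)[OF that] LB1 by linarith
    have "V t \<le> Lon * c / (b * K)" using parts(3)[OF that] bKc b c K by (simp add: field_simps)
    then show "V t \<le> Bd" using LB2 unfolding Lcq_def by linarith
  qed
  have Bd0: "Bd \<ge> 1" using L1nn Lc0 K unfolding Bd_def by linarith
  define t0 where "t0 = 1 + \<tau>"
  have t0: "t0 \<ge> 1" "t0 \<ge> 0" using tau by (auto simp: t0_def)
  have late: "t \<ge> 1" "t - \<tau> \<ge> 1" "t > 0" if "t > t0" for t using that tau by (auto simp: t0_def)
  define CT where "CT = s + d * Bd + a * Bd * (1 + 2 * Bd / Tmax) + b * Bd * Bd"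
  define CI where "CI = b * Bd * Bd + a * Bd * (1 + 2 * Bd / Tmax) + \<mu> * Bd"
  define CV where "CV = p * Bd + c * Bd"
  define dT where "dT t = s - d * T t + a * T t * (1 - (T t + I t) / Tmax) - b * T t * V t / (1 + \<alpha> * V t)" for t
  define dI where "dI t = b * T (t - \<tau>) * V (t - \<tau>) / (1 + \<alpha> * V (t - \<tau>))
            + a * I t * (1 - (T t + I t) / Tmax) - \<mu> * I t" for t
  define dV where "dV t = p * I t - c * V t" for t
  have bdT: "\<bar>dT t\<bar> \<le> CT" if "t > t0" for t
  proof -
    note l = late[OF that]
    have "\<bar>dT t\<bar> \<le> \<bar>s\<bar> + \<bar>d * T t\<bar> + \<bar>a * T t * (1 - (T t + I t) / Tmax)\<bar> + \<bar>b * T t * V t / (1 + \<alpha> * V t)\<bar>"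
      unfolding dT_def by (rule abs4)
    also have "\<dots> \<le> s + d * Bd + a * Bd * (1 + 2 * Bd / Tmax) + b * Bd * Bd"
    proof -
      have "\<bar>d * T t\<bar> \<le> d * Bd" using d nnt[OF l(1)] bnds[OF l(1)] by (simp add: abs_mult)
      moreover have "\<bar>a * T t * (1 - (T t + I t) / Tmax)\<bar> \<le> a * Bd * (1 + 2 * Bd / Tmax)"
        using nnt[OF l(1)] bnds[OF l(1)] by (intro bnd_B a Tm) auto
      moreover have "\<bar>b * T t * V t / (1 + \<alpha> * V t)\<bar> \<le> b * Bd * Bd"
        using nnt[OF l(1)] bnds[OF l(1)] by (intro bnd_A b al) auto
      ultimately show ?thesis using s by simp
    qed
    finally show ?thesis unfolding CT_def .
  qed
  have bdI: "\<bar>dI t\<bar> \<le> CI" if "t > t0" for t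
  proof -
    note l = late[OF that]
    have "\<bar>dI t\<bar> \<le> \<bar>b * T (t - \<tau>) * V (t - \<tau>) / (1 + \<alpha> * V (t - \<tau>))\<bar>
        + \<bar>a * I t * (1 - (T t + I t) / Tmax)\<bar> + \<bar>\<mu> * I t\<bar>"
      unfolding dI_def by (rule abs3)
    also have "\<dots> \<le> b * Bd * Bd + a * Bd * (1 + 2 * Bd / Tmax) + \<mu> * Bd"
    proof -
      have "\<bar>b * T (t - \<tau>) * V (t - \<tau>) / (1 + \<alpha> * V (t - \<tau>))\<bar> \<le> b * Bd * Bd"
        using nnt[OF l(2)] bnds[OF l(2)] by (intro bnd_A b al) auto
      moreover have "\<bar>a * I t * (1 - (T t + I t) / Tmax)\<bar> \<le> a * Bd * (1 + 2 * Bd / Tmax)"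
        using nnt[OF l(1)] bnds[OF l(1)] by (intro bnd_B a Tm) auto
      moreover have "\<bar>\<mu> * I t\<bar> \<le> \<mu> * Bd" using mu nnt[OF l(1)] bnds[OF l(1)] by (simp add: abs_mult)
      ultimately show ?thesis by simp
    qed
    finally show ?thesis unfolding CI_def .
  qed
  have bdV: "\<bar>dV t\<bar> \<le> CV" if "t > t0" for t
  proof -
    note l = late[OF that]
    have "\<bar>dV t\<bar> \<le> \<bar>p * I t\<bar> + \<bar>c * V t\<bar>" unfolding dV_def by (rule abs_triangle_ineq4)
    also have "\<dots> \<le> p * Bd + c * Bd"
      using p c nnt[OF l(1)] bnds[OF l(1)] by (simp add: abs_mult add_mono)
    finally show ?thesis unfolding CV_def .
  qed
  have dTd: "(T has_real_derivative dT t) (at t)" if "t > t0" for t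
    unfolding dT_def using derT late[OF that] by simp
  have dId: "(I has_real_derivative dI t) (at t)" if "t > t0" for t
    unfolding dI_def using derI late[OF that] by simp
  have dVd: "(V has_real_derivative dV t) (at t)" if "t > t0" for t
    unfolding dV_def using derV late[OF that] by simp
  have sub: "{t0..} \<subseteq> {-\<tau>..}" using t0 tau by auto
  have cT: "continuous_on {t0..} T" and cI: "continuous_on {t0..} I" and cV: "continuous_on {t0..} V"
    using contT contI contV sub by (auto intro: continuous_on_subset)
  have Lcq: "continuous_on {t0..} Lf" by (rule Lf_cont[OF t0(2) Tp[OF t0(1)]])
  have Ld: "(Lf has_real_derivative LD t) (at t)" if "t > t0" for t using LD_der late[OF that] by simp
  have Lnn: "Lf t \<ge> 0" if "t \<ge> t0" for t using Lf_nn[of t] Tp[of t] that t0 by simp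
  have LDle: "LD t \<le> -(a/Tmax)*(T t-K+I t)^2 - s*(T t-K)^2/(K*T t) - b*K*\<alpha>*(V t)^2/(1+\<alpha>*V t)"
    if "t > t0" for t using LD_le[OF late(3)[OF that] R] by (simp add: K_def)
  have rp: "s*(T t-K)^2/(K*T t) \<ge> 0" "b*K*\<alpha>*(V t)^2/(1+\<alpha>*V t) \<ge> 0" "(a/Tmax)*(T t-K+I t)^2 \<ge> 0"
    if "t > t0" for t using rhs_parts[OF late(3)[OF that]] by (simp_all add: K_def)
  have c1: "\<exists>N. \<forall>t\<ge>N. \<bar>T t - K\<bar> < e" if e: "e > 0" for e
  proof (rule conv_barbalat[OF Lcq Ld, where k = "s / (K * Bd)" and f' = dT and A = "Bd + K" and C = CT])
    fix t assume t: "t > t0"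
    have Tt: "T t > 0" "T t \<le> Bd" using Tp bnds late[OF t] by auto
    have "s / (K * Bd) \<le> s / (K * T t)" using Tt K s by (intro divide_left_mono mult_left_mono) auto
    then have "s / (K * Bd) * (T t - K)^2 \<le> s / (K * T t) * (T t - K)^2" by (intro mult_right_mono) auto
    also have "\<dots> = s*(T t-K)^2/(K*T t)" by simp
    finally show "LD t \<le> - (s / (K * Bd)) * (T t - K)^2" using LDle[OF t] rp[OF t] by linarith
  next
    show "continuous_on {t0..} (\<lambda>t. T t - K)" using cT by (auto intro!: continuous_intros)
    fix t assume t: "t > t0"
    show "((\<lambda>t. T t - K) has_real_derivative dT t) (at t)" using dTd[OF t] by (auto intro!: derivative_eq_intros)
    show "\<bar>dT t\<bar> \<le> CT" using bdT[OF t] .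
  next
    fix t assume t: "t \<ge> t0"
    then show "\<bar>T t - K\<bar> \<le> Bd + K" using nnt[of t] bnds[of t] t0 K by (simp add: abs_le_iff)
  qed (use Lnn s K Bd0 e in auto)
  have c2: "\<exists>N. \<forall>t\<ge>N. \<bar>T t - K + I t\<bar> < e" if e: "e > 0" for e
  proof (rule conv_barbalat[OF Lcq Ld, where k = "a / Tmax" and f' = "\<lambda>t. dT t + dI t" and A = "2 * Bd + K"
        and C = "CT + CI"])
    fix t assume t: "t > t0"
    show "LD t \<le> - (a / Tmax) * (T t - K + I t)^2" using LDle[OF t] rp[OF t] by linarith
  next
    show "continuous_on {t0..} (\<lambda>t. T t - K + I t)" using cT cI by (auto intro!: continuous_intros)
    fix t assume t: "t > t0"
    show "((\<lambda>t. T t - K + I t) has_real_derivative dT t + dI t) (at t)"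
      using dTd[OF t] dId[OF t] by (auto intro!: derivative_eq_intros)
    show "\<bar>dT t + dI t\<bar> \<le> CT + CI" using bdT[OF t] bdI[OF t] abs_triangle_ineq[of "dT t" "dI t"] by linarith
  next
    fix t assume t: "t \<ge> t0"
    then show "\<bar>T t - K + I t\<bar> \<le> 2 * Bd + K" using nnt[of t] bnds[of t] t0 K by (simp add: abs_le_iff)
  qed (use Lnn a Tm e in auto)
  have c3: "\<exists>N. \<forall>t\<ge>N. \<bar>V t\<bar> < e" if e: "e > 0" for e
  proof (rule conv_barbalat[OF Lcq Ld, where k = "b * K * \<alpha> / (1 + \<alpha> * Bd)" and f' = dV and A = Bd and C = CV])
    fix t assume t: "t > t0"
    have Vt: "V t \<ge> 0" "V t \<le> Bd" using nnt bnds late[OF t] by auto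
    have pos: "b * K * \<alpha> > 0" using b K al by simp
    have "b * K * \<alpha> / (1 + \<alpha> * Bd) \<le> b * K * \<alpha> / (1 + \<alpha> * V t)"
    proof (rule divide_left_mono)
      show "1 + \<alpha> * V t \<le> 1 + \<alpha> * Bd" using Vt al by (simp add: mult_left_mono)
      have d1: "1 + \<alpha> * V t > 0" using Vt al by (simp add: add_pos_nonneg)
      have d2: "1 + \<alpha> * Bd > 0" using Vt al by (simp add: add_pos_nonneg)
      show "0 < (1 + \<alpha> * Bd) * (1 + \<alpha> * V t)" using d1 d2 by simp
    qed (use pos in simp)
    then have "b * K * \<alpha> / (1 + \<alpha> * Bd) * (V t)^2 \<le> b * K * \<alpha> / (1 + \<alpha> * V t) * (V t)^2"
      by (intro mult_right_mono) auto
    also have "\<dots> = b*K*\<alpha>*(V t)^2/(1+\<alpha>*V t)" by simp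
    finally show "LD t \<le> - (b * K * \<alpha> / (1 + \<alpha> * Bd)) * (V t)^2" using LDle[OF t] rp[OF t] by linarith
  next
    show "continuous_on {t0..} V" by (rule cV)
    fix t assume t: "t > t0"
    show "(V has_real_derivative dV t) (at t)" by (rule dVd[OF t])
    show "\<bar>dV t\<bar> \<le> CV" using bdV[OF t] .
  next
    fix t assume t: "t \<ge> t0"
    then show "\<bar>V t\<bar> \<le> Bd" using nnt[of t] bnds[of t] t0 by simp
  qed (use Lnn b K al Bd0 e in \<open>auto intro!: divide_pos_pos add_pos_pos\<close>)
  have "(T \<longlongrightarrow> K) at_top" by (rule tendsto_from_eps) (use c1 in blast)
  moreover have "(V \<longlongrightarrow> 0) at_top" by (rule tendsto_from_eps) (use c3 in simp)
  moreover have "(I \<longlongrightarrow> 0) at_top"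
  proof (rule tendsto_from_eps)
    fix e :: real assume e: "e > 0"
    obtain N1 where N1: "\<forall>t\<ge>N1. \<bar>T t - K\<bar> < e/2" using c1[of "e/2"] e by auto
    obtain N2 where N2: "\<forall>t\<ge>N2. \<bar>T t - K + I t\<bar> < e/2" using c2[of "e/2"] e by auto
    have "\<forall>t\<ge>max N1 N2. \<bar>I t - 0\<bar> < e"
    proof (intro allI impI)
      fix t assume "t \<ge> max N1 N2"
      then have "\<bar>T t - K\<bar> < e/2" "\<bar>T t - K + I t\<bar> < e/2" using N1 N2 by auto
      then show "\<bar>I t - 0\<bar> < e" by linarith
    qed
    then show "\<exists>N. \<forall>t\<ge>N. \<bar>I t - 0\<bar> < e" by blast
  qed
  ultimately show ?thesis by (simp add: K_def)
qed

end



theorem theorem3: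
  fixes s d a Tmax b \<alpha> \<mu> p c \<tau> :: real
  assumes "s > 0" "d > 0" "a > 0" "Tmax > 0" "b > 0" "\<alpha> > 0" "\<mu> > 0" "p > 0" "c > 0"
    and "\<tau> \<ge> 0"
    and "R0_num s d a Tmax b \<mu> p c \<le> 1"
  shows
    "(\<forall>\<epsilon>>0. \<exists>\<delta>>0. \<forall>T I V. is_solution s d a Tmax b \<alpha> \<mu> p c \<tau> T I V \<longrightarrow>
        (\<forall>t\<in>{-\<tau>..0}. \<bar>T t - T0_eq s d a Tmax\<bar> < \<delta> \<and> \<bar>I t\<bar> < \<delta> \<and> \<bar>V t\<bar> < \<delta>) \<longrightarrow>
        (\<forall>t\<ge>0. \<bar>T t - T0_eq s d a Tmax\<bar> < \<epsilon> \<and> \<bar>I t\<bar> < \<epsilon> \<and> \<bar>V t\<bar> < \<epsilon>))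
     \<and>
     (\<forall>T I V. is_solution s d a Tmax b \<alpha> \<mu> p c \<tau> T I V \<longrightarrow>
        (T \<longlongrightarrow> T0_eq s d a Tmax) at_top \<and> (I \<longlongrightarrow> 0) at_top \<and> (V \<longlongrightarrow> 0) at_top)"
proof (rule conjI)
  show "\<forall>\<epsilon>>0. \<exists>\<delta>>0. \<forall>T I V. is_solution s d a Tmax b \<alpha> \<mu> p c \<tau> T I V \<longrightarrow>
        (\<forall>t\<in>{-\<tau>..0}. \<bar>T t - T0_eq s d a Tmax\<bar> < \<delta> \<and> \<bar>I t\<bar> < \<delta> \<and> \<bar>V t\<bar> < \<delta>) \<longrightarrow>
        (\<forall>t\<ge>0. \<bar>T t - T0_eq s d a Tmax\<bar> < \<epsilon> \<and> \<bar>I t\<bar> < \<epsilon> \<and> \<bar>V t\<bar> < \<epsilon>)"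
  proof (intro allI impI)
    fix \<epsilon> :: real assume e: "\<epsilon> > 0"
    have dp: "dlt s d a Tmax b c \<tau> \<epsilon> > 0" by (rule dlt_pos) (use assms e in auto)
    have "\<forall>T I V. is_solution s d a Tmax b \<alpha> \<mu> p c \<tau> T I V \<longrightarrow>
        (\<forall>t\<in>{-\<tau>..0}. \<bar>T t - T0_eq s d a Tmax\<bar> < dlt s d a Tmax b c \<tau> \<epsilon> \<and> \<bar>I t\<bar> < dlt s d a Tmax b c \<tau> \<epsilon>
            \<and> \<bar>V t\<bar> < dlt s d a Tmax b c \<tau> \<epsilon>) \<longrightarrow>
        (\<forall>t\<ge>0. \<bar>T t - T0_eq s d a Tmax\<bar> < \<epsilon> \<and> \<bar>I t\<bar> < \<epsilon> \<and> \<bar>V t\<bar> < \<epsilon>)"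
    proof (intro allI impI)
      fix T I V :: "real \<Rightarrow> real" and t :: real
      assume sol: "is_solution s d a Tmax b \<alpha> \<mu> p c \<tau> T I V"
        and cl: "\<forall>t\<in>{-\<tau>..0}. \<bar>T t - T0_eq s d a Tmax\<bar> < dlt s d a Tmax b c \<tau> \<epsilon> \<and> \<bar>I t\<bar> < dlt s d a Tmax b c \<tau> \<epsilon>
            \<and> \<bar>V t\<bar> < dlt s d a Tmax b c \<tau> \<epsilon>"
        and t: "0 \<le> t"
      interpret S: sys s d a Tmax b \<alpha> \<mu> p c \<tau> T I V
        by (rule sys.intro) (use assms sol in auto)
      have cl': "\<forall>t\<in>{-\<tau>..0}. \<bar>T t - S.Ke\<bar> < dlt s d a Tmax b c \<tau> \<epsilon> \<and> \<bar>I t\<bar> < dlt s d a Tmax b c \<tau> \<epsilon>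
            \<and> \<bar>V t\<bar> < dlt s d a Tmax b c \<tau> \<epsilon>" using cl by (simp add: S.Ke_def)
      show "\<bar>T t - T0_eq s d a Tmax\<bar> < \<epsilon> \<and> \<bar>I t\<bar> < \<epsilon> \<and> \<bar>V t\<bar> < \<epsilon>"
        using S.stab[OF assms(11) e cl' t] by (simp add: S.Ke_def)
    qed
    then show "\<exists>\<delta>>0. \<forall>T I V. is_solution s d a Tmax b \<alpha> \<mu> p c \<tau> T I V \<longrightarrow>
        (\<forall>t\<in>{-\<tau>..0}. \<bar>T t - T0_eq s d a Tmax\<bar> < \<delta> \<and> \<bar>I t\<bar> < \<delta> \<and> \<bar>V t\<bar> < \<delta>) \<longrightarrow>
        (\<forall>t\<ge>0. \<bar>T t - T0_eq s d a Tmax\<bar> < \<epsilon> \<and> \<bar>I t\<bar> < \<epsilon> \<and> \<bar>V t\<bar> < \<epsilon>)"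
      using dp by blast
  qed
next
  show "\<forall>T I V. is_solution s d a Tmax b \<alpha> \<mu> p c \<tau> T I V \<longrightarrow>
        (T \<longlongrightarrow> T0_eq s d a Tmax) at_top \<and> (I \<longlongrightarrow> 0) at_top \<and> (V \<longlongrightarrow> 0) at_top"
  proof (intro allI impI)
    fix T I V :: "real \<Rightarrow> real"
    assume sol: "is_solution s d a Tmax b \<alpha> \<mu> p c \<tau> T I V"
    interpret S: sys s d a Tmax b \<alpha> \<mu> p c \<tau> T I V
      by (rule sys.intro) (use assms sol in auto)
    show "(T \<longlongrightarrow> T0_eq s d a Tmax) at_top \<and> (I \<longlongrightarrow> 0) at_top \<and> (V \<longlongrightarrow> 0) at_top"
      using S.attr[OF assms(11)] by (simp add: S.Ke_def)
  qed
qed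

end
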